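(* Let $c:I\to\mathbb{L}^3$ ($I\subset\mathbb{R}$ an open interval) be a regular real analytic curve which is spacelike or timelike, and let $n:I\to\mathbb{L}^3$ be a real analytic spacelike unit normal vector field along $c$ (i.e. $\langle n,n\rangle=1$ and $\langle n(t),c'(t)\rangle=0$). Then there exists a Born-Infeld soliton general surface which solves the Björling problem for $(c,n)$, i.e. a Born-Infeld soliton general surface $X:\Omega\to\mathbb{L}^3$, with $\Omega\subset\mathbb{R}^2$ open containing $I\times\{0\}$, such that $X(t,0)=c(t)$ and the unit normal of $X$ satisfies $N(t,0)=n(t)$ for all $t\in I$.
   Context: $\mathbb{L}^3$ denotes $\mathbb{R}^3$ with the metric $\langle\cdot,\cdot\rangle$ given by $ds^2=dx^2+dy^2-dz^2$. A function $\psi$ on an open set of the $(u,v)$-plane is a Born-Infeld soliton (in the variables $u,v$) if $(1-\psi_v^2)\psi_{uu}+2\psi_u\psi_v\psi_{uv}-(1+\psi_u^2)\psi_{vv}=0$. A surface is a Born-Infeld soliton general surface if it is locally of the form $(\psi(y,z),y,z)$, $(x,\psi(x,z),z)$ or $(x,y,\psi(x,y))$ where $\psi$ solves the Born-Infeld equation (in the respective pair of variables). *)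

theory Defs
  imports "HOL-Analysis.Analysis"
begin

text \<open>Lorentz-Minkowski space L^3: R^3 with ds^2 = dx^2 + dy^2 - dz^2.\<close>
definition lprod :: "real^3 \<Rightarrow> real^3 \<Rightarrow> real" where
  "lprod a b = a$1 * b$1 + a$2 * b$2 - a$3 * b$3"

definition real_analytic_fun_on :: "(real \<Rightarrow> real) \<Rightarrow> real set \<Rightarrow> bool" where
  "real_analytic_fun_on f S \<longleftrightarrow>
     (\<forall>t\<in>S. \<exists>r>0. \<exists>a::nat \<Rightarrow> real.
        \<forall>s\<in>S. \<bar>s - t\<bar> < r \<longrightarrow> (\<lambda>k. a k * (s - t) ^ k) sums f s)"

definition real_analytic_curve_on :: "(real \<Rightarrow> real^3) \<Rightarrow> real set \<Rightarrow> bool" where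
  "real_analytic_curve_on c S \<longleftrightarrow> (\<forall>i. real_analytic_fun_on (\<lambda>t. c t $ i) S)"

definition pd_u :: "(real \<times> real \<Rightarrow> real) \<Rightarrow> real \<times> real \<Rightarrow> real" where
  "pd_u f p = deriv (\<lambda>s. f (s, snd p)) (fst p)"

definition pd_v :: "(real \<times> real \<Rightarrow> real) \<Rightarrow> real \<times> real \<Rightarrow> real" where
  "pd_v f p = deriv (\<lambda>s. f (fst p, s)) (snd p)"

definition born_infeld_soliton :: "(real \<times> real \<Rightarrow> real) \<Rightarrow> (real \<times> real) set \<Rightarrow> bool" where
  "born_infeld_soliton \<psi> V \<longleftrightarrow>
     open V \<and> \<psi> differentiable_on V \<and>
     pd_u \<psi> differentiable_on V \<and> pd_v \<psi> differentiable_on V \<and>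
     (\<forall>p\<in>V. (1 - (pd_v \<psi> p)\<^sup>2) * pd_u (pd_u \<psi>) p
              + 2 * pd_u \<psi> p * pd_v \<psi> p * pd_u (pd_v \<psi>) p
              - (1 + (pd_u \<psi> p)\<^sup>2) * pd_v (pd_v \<psi>) p = 0)"

definition graph_x :: "(real \<times> real \<Rightarrow> real) \<Rightarrow> (real \<times> real) set \<Rightarrow> (real^3) set" where
  "graph_x \<psi> V = {vector [\<psi> (y, z), y, z] | y z. (y, z) \<in> V}"

definition graph_y :: "(real \<times> real \<Rightarrow> real) \<Rightarrow> (real \<times> real) set \<Rightarrow> (real^3) set" where
  "graph_y \<psi> V = {vector [x, \<psi> (x, z), z] | x z. (x, z) \<in> V}"

definition graph_z :: "(real \<times> real \<Rightarrow> real) \<Rightarrow> (real \<times> real) set \<Rightarrow> (real^3) set" where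
  "graph_z \<psi> V = {vector [x, y, \<psi> (x, y)] | x y. (x, y) \<in> V}"

definition X_u :: "(real \<times> real \<Rightarrow> real^3) \<Rightarrow> real \<times> real \<Rightarrow> real^3" where
  "X_u X p = frechet_derivative X (at p) (1, 0)"

definition X_v :: "(real \<times> real \<Rightarrow> real^3) \<Rightarrow> real \<times> real \<Rightarrow> real^3" where
  "X_v X p = frechet_derivative X (at p) (0, 1)"

definition regular_surface :: "(real \<times> real \<Rightarrow> real^3) \<Rightarrow> (real \<times> real) set \<Rightarrow> bool" where
  "regular_surface X \<Omega> \<longleftrightarrow> open \<Omega> \<and>
     (\<forall>p\<in>\<Omega>. X differentiable (at p) \<and> X_u X p \<noteq> 0 \<and>
              (\<forall>a::real. X_v X p \<noteq> a *\<^sub>R X_u X p))"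

definition BI_general_surface :: "(real \<times> real \<Rightarrow> real^3) \<Rightarrow> (real \<times> real) set \<Rightarrow> bool" where
  "BI_general_surface X \<Omega> \<longleftrightarrow> regular_surface X \<Omega> \<and>
     (\<forall>p\<in>\<Omega>. \<exists>U. open U \<and> p \<in> U \<and> U \<subseteq> \<Omega> \<and>
        (\<exists>\<psi> V. born_infeld_soliton \<psi> V \<and>
           (X ` U = graph_x \<psi> V \<or> X ` U = graph_y \<psi> V \<or> X ` U = graph_z \<psi> V)))"

definition unit_normal_field ::
  "(real \<times> real \<Rightarrow> real^3) \<Rightarrow> (real \<times> real \<Rightarrow> real^3) \<Rightarrow> (real \<times> real) set \<Rightarrow> bool" where
  "unit_normal_field X N \<Omega> \<longleftrightarrow> continuous_on \<Omega> N \<and>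
     (\<forall>p\<in>\<Omega>. lprod (N p) (X_u X p) = 0 \<and> lprod (N p) (X_v X p) = 0 \<and>
              \<bar>lprod (N p) (N p)\<bar> = 1)"

end

theory Submission
  imports Defs
begin

lemma analytic_local:
  assumes an: "real_analytic_fun_on f S" and S: "open S" and t: "t \<in> S"
  obtains R a where "R > 0" "ball t R \<subseteq> S"
    "\<And>y. y \<in> ball t R \<Longrightarrow> (f has_real_derivative (\<Sum>k. diffs a k * (y - t)^k)) (at y)"
    "\<And>y. y \<in> ball t R \<Longrightarrow> (\<lambda>k. diffs a k * (y - t)^k) sums (\<Sum>k. diffs a k * (y - t)^k)"
proof -
  obtain r a where r: "r > 0" and H: "\<forall>s\<in>S. \<bar>s - t\<bar> < r \<longrightarrow> (\<lambda>k. a k * (s - t) ^ k) sums f s"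
    using an t unfolding real_analytic_fun_on_def by blast
  obtain e where e: "e > 0" "ball t e \<subseteq> S" using S t open_contains_ball by blast
  define R where "R = min r e"
  have R: "R > 0" using r e by (simp add: R_def)
  have sm: "(\<lambda>k. a k * z ^ k) sums f (t + z)" if "norm z < R" for z :: real
  proof -
    have "t + z \<in> S" using that e(2) by (auto simp: R_def dist_norm)
    then show ?thesis using H that by (auto simp: R_def)
  qed
  have smz: "summable (\<lambda>k. a k * z ^ k)" if "norm z < R" for z :: real
    using sm[OF that] sums_summable by blast
  have eqf: "f y = (\<Sum>k. a k * (y - t) ^ k)" if "y \<in> ball t R" for y
  proof -
    have "norm (y - t) < R" using that by (simp add: dist_norm abs_minus_commute)
    from sm[OF this] show ?thesis by (simp add: sums_iff)
  qed
  show ?thesis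
  proof
    show "R > 0" by (rule R)
    show "ball t R \<subseteq> S" using e by (auto simp: R_def)
  next
    fix y assume y: "y \<in> ball t R"
    have ny: "norm (y - t) < R" using y by (simp add: dist_norm abs_minus_commute)
    have d1: "((\<lambda>z. \<Sum>k. a k * z ^ k) has_field_derivative (\<Sum>k. diffs a k * (y - t) ^ k)) (at (y - t))"
      by (rule termdiffs_strong'[OF smz ny])
    have d2: "((\<lambda>y. \<Sum>k. a k * (y - t) ^ k) has_field_derivative (\<Sum>k. diffs a k * (y - t) ^ k)) (at y)"
    proof -
      have "((\<lambda>y. y - t) has_real_derivative 1) (at y)" by (auto intro!: derivative_eq_intros)
      from DERIV_chain2[OF d1 this] show ?thesis by simp
    qed
    show "(f has_real_derivative (\<Sum>k. diffs a k * (y - t)^k)) (at y)"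
      by (rule has_field_derivative_transform_within_open[OF d2 _ y]) (auto simp: eqf)
    show "(\<lambda>k. diffs a k * (y - t)^k) sums (\<Sum>k. diffs a k * (y - t)^k)"
      using termdiff_converges[OF ny, of a] smz by (simp add: summable_sums)
  qed
qed

lemma analytic_deriv:
  assumes an: "real_analytic_fun_on f S" and S: "open S"
  shows "\<And>t. t \<in> S \<Longrightarrow> (f has_real_derivative deriv f t) (at t)"
    and "real_analytic_fun_on (deriv f) S"
proof -
  fix t assume t: "t \<in> S"
  obtain R a where "R > 0" "ball t R \<subseteq> S"
    and d: "\<And>y. y \<in> ball t R \<Longrightarrow> (f has_real_derivative (\<Sum>k. diffs a k * (y - t)^k)) (at y)"
    using analytic_local[OF an S t] by metis
  from d[of t] \<open>R > 0\<close> show "(f has_real_derivative deriv f t) (at t)"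
    using DERIV_imp_deriv by fastforce
next
  show "real_analytic_fun_on (deriv f) S"
    unfolding real_analytic_fun_on_def
  proof
    fix t assume t: "t \<in> S"
    obtain R a where R: "R > 0" "ball t R \<subseteq> S"
      and d: "\<And>y. y \<in> ball t R \<Longrightarrow> (f has_real_derivative (\<Sum>k. diffs a k * (y - t)^k)) (at y)"
      and sm: "\<And>y. y \<in> ball t R \<Longrightarrow> (\<lambda>k. diffs a k * (y - t)^k) sums (\<Sum>k. diffs a k * (y - t)^k)"
      using analytic_local[OF an S t] by metis
    show "\<exists>r>0. \<exists>a. \<forall>s\<in>S. \<bar>s - t\<bar> < r \<longrightarrow> (\<lambda>k. a k * (s - t) ^ k) sums deriv f s"
    proof (intro exI conjI ballI impI)
      show "R > 0" by (rule R)
      fix s assume "s \<in> S" "\<bar>s - t\<bar> < R"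
      then have s: "s \<in> ball t R" by (simp add: dist_norm abs_minus_commute)
      have "deriv f s = (\<Sum>k. diffs a k * (s - t)^k)" using d[OF s] by (rule DERIV_imp_deriv)
      then show "(\<lambda>k. diffs a k * (s - t) ^ k) sums deriv f s" using sm[OF s] by simp
    qed
  qed
qed

lemma vec3_deriv:
  fixes c :: "real \<Rightarrow> real^'n"
  assumes "\<And>i. ((\<lambda>t. c t $ i) has_real_derivative d i) (at t within S)"
  shows "(c has_vector_derivative (\<chi> i. d i)) (at t within S)"
  unfolding has_vector_derivative_def
  apply (subst has_derivative_componentwise_within)
  using assms
  by (auto simp: Basis_vec_def inner_axis has_real_derivative_iff_has_vector_derivative has_vector_derivative_def)

definition vd :: "(real \<Rightarrow> real^3) \<Rightarrow> real \<Rightarrow> real^3" where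
  "vd c t = (\<chi> i. deriv (\<lambda>t. c t $ i) t)"

lemma analytic_curve_deriv:
  assumes "real_analytic_curve_on c S" "open S"
  shows "\<And>t. t \<in> S \<Longrightarrow> (c has_vector_derivative vd c t) (at t)"
    and "real_analytic_curve_on (vd c) S"
proof -
  fix t assume t: "t \<in> S"
  show "(c has_vector_derivative vd c t) (at t)"
    unfolding vd_def
    by (rule vec3_deriv) (use assms t analytic_deriv(1) in \<open>auto simp: real_analytic_curve_on_def\<close>)
next
  show "real_analytic_curve_on (vd c) S"
    using assms analytic_deriv(2) by (auto simp: real_analytic_curve_on_def vd_def)
qed

lemma antideriv_interval:
  fixes f :: "real \<Rightarrow> 'a::banach"
  assumes I: "open I" "is_interval I" and cf: "continuous_on I f" and t0: "t0 \<in> I"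
  shows "\<exists>K. \<forall>x\<in>I. (K has_vector_derivative f x) (at x)"
proof -
  define K where "K x = integral {t0..x} f - integral {x..t0} f" for x
  have "(K has_vector_derivative f x) (at x)" if x: "x \<in> I" for x
  proof -
    obtain e1 where e1: "e1 > 0" "ball (min x t0) e1 \<subseteq> I"
      using I(1) x t0 open_contains_ball by (metis min_def)
    obtain e2 where e2: "e2 > 0" "ball (max x t0) e2 \<subseteq> I"
      using I(1) x t0 open_contains_ball by (metis max_def)
    define a where "a = min x t0 - e1/2"
    define b where "b = max x t0 + e2/2"
    have "a \<in> ball (min x t0) e1" using e1 by (simp add: a_def dist_real_def)
    then have aI: "a \<in> I" using e1(2) by blast
    have "b \<in> ball (max x t0) e2" using e2 by (simp add: b_def dist_real_def)
    then have bI: "b \<in> I" using e2(2) by blast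
    have ab: "{a..b} \<subseteq> I"
    proof
      fix y assume "y \<in> {a..b}"
      then have "a \<le> y" "y \<le> b" by auto
      then show "y \<in> I" using I(2) aI bI unfolding is_interval_1 by blast
    qed
    have cab: "continuous_on {a..b} f" using continuous_on_subset[OF cf ab] .
    have intg: "f integrable_on {a..b}" using cab integrable_continuous_real by blast
    have at0: "a < t0" "t0 < b" "a < x" "x < b" using e1 e2 by (auto simp: a_def b_def)
    have Keq: "K y = integral {a..y} f - integral {a..t0} f" if y: "y \<in> {a..b}" for y
    proof (cases "t0 \<le> y")
      case True
      have "Henstock_Kurzweil_Integration.content {y..t0} = 0" using True by simp
      then have "integral {y..t0} f = 0" by (metis integral_null box_real(2))
      moreover have "integral {a..t0} f + integral {t0..y} f = integral {a..y} f"
        using True at0 y integrable_subinterval_real[OF intg, of a y]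
        by (intro Henstock_Kurzweil_Integration.integral_combine) auto
      ultimately show ?thesis by (simp add: K_def algebra_simps)
    next
      case False
      have "Henstock_Kurzweil_Integration.content {t0..y} = 0" using False by simp
      then have "integral {t0..y} f = 0" by (metis integral_null box_real(2))
      moreover have "integral {a..y} f + integral {y..t0} f = integral {a..t0} f"
        using False at0 y integrable_subinterval_real[OF intg, of a t0]
        by (intro Henstock_Kurzweil_Integration.integral_combine) auto
      ultimately show ?thesis by (simp add: K_def algebra_simps)
    qed
    have d: "((\<lambda>y. integral {a..y} f - integral {a..t0} f) has_vector_derivative f x) (at x within {a..b})"
      using integral_has_vector_derivative[OF cab, of x] at0
      by (auto intro!: derivative_eq_intros)
    have sub: "{a<..<b} \<subseteq> {a..b}" by auto
    have d1: "((\<lambda>y. integral {a..y} f - integral {a..t0} f) has_vector_derivative f x) (at x within {a<..<b})"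
      using has_vector_derivative_within_subset[OF d sub] .
    have "at x within {a<..<b} = at x" using at0 by (intro at_within_open) auto
    with d1 have d2: "((\<lambda>y. integral {a..y} f - integral {a..t0} f) has_vector_derivative f x) (at x)"
      by simp
    show ?thesis
      by (rule has_vector_derivative_transform_within_open[OF d2, of "{a<..<b}"]) (use at0 Keq in auto)
  qed
  then show ?thesis by blast
qed

definition lcross :: "real^3 \<Rightarrow> real^3 \<Rightarrow> real^3" where
  "lcross a b = vector [a$2*b$3 - a$3*b$2, a$3*b$1 - a$1*b$3, a$2*b$1 - a$1*b$2]"

lemma lcross_nth [simp]:
  "lcross a b $ 1 = a$2*b$3 - a$3*b$2"
  "lcross a b $ 2 = a$3*b$1 - a$1*b$3"
  "lcross a b $ 3 = a$2*b$1 - a$1*b$2"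
  by (simp_all add: lcross_def)

lemma vec3_eq: "(x::real^3) = y \<longleftrightarrow> x$1 = y$1 \<and> x$2 = y$2 \<and> x$3 = y$3"
  by (simp add: vec_eq_iff forall_3)

lemma lprod_lcross1: "lprod (lcross a b) a = 0"
  unfolding lprod_def lcross_nth by algebra
lemma lprod_lcross2: "lprod (lcross a b) b = 0"
  unfolding lprod_def lcross_nth by algebra
lemma lprod_lcross_self: "lprod (lcross a b) (lcross a b) = (lprod a b)^2 - lprod a a * lprod b b"
  unfolding lprod_def lcross_nth by algebra
lemma lcross_lcross: "lcross (lcross a b) c = lprod b c *\<^sub>R a - lprod a c *\<^sub>R b"
  unfolding vec3_eq lprod_def lcross_nth vector_minus_component vector_scaleR_component real_scaleR_def
  by (intro conjI; algebra)
lemma lprod_sym: "lprod a b = lprod b a"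
  unfolding lprod_def by algebra

lemma vd_nth:
  fixes c :: "real \<Rightarrow> real^'n"
  assumes "(c has_vector_derivative d) (at t within S)"
  shows "((\<lambda>t. c t $ i) has_real_derivative d $ i) (at t within S)"
  using assms unfolding has_vector_derivative_def
  apply (subst (asm) has_derivative_componentwise_within)
  by (auto simp: Basis_vec_def inner_axis has_real_derivative_iff_has_vector_derivative has_vector_derivative_def)

lemma pd_from_deriv:
  fixes f :: "real \<times> real \<Rightarrow> real"
  assumes d: "(f has_derivative f') (at y)"
  shows "pd_u f y = f' (1,0)" "pd_v f y = f' (0,1)"
proof -
  have lin: "linear f'" using d has_derivative_linear by blast
  have i1: "((\<lambda>s. (s, snd y)) has_derivative (\<lambda>h. (h, 0))) (at (fst y))"
    by (auto intro!: derivative_eq_intros)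
  have d1: "(f has_derivative f') (at ((\<lambda>s. (s, snd y)) (fst y)))" using d by simp
  have "((\<lambda>s. f (s, snd y)) has_derivative (\<lambda>h. f' (h, 0))) (at (fst y))"
    using diff_chain_at[OF i1 d1] by (simp add: o_def)
  moreover have "(\<lambda>h. f' (h, 0)) = (\<lambda>h. f' (1,0) * h)"
  proof
    fix h :: real
    have "f' (h, 0) = f' (h *\<^sub>R (1,0))" by simp
    also have "\<dots> = h *\<^sub>R f' (1,0)" using lin by (rule linear_scale)
    finally show "f' (h, 0) = f' (1,0) * h" by simp
  qed
  ultimately have "((\<lambda>s. f (s, snd y)) has_real_derivative f' (1,0)) (at (fst y))"
    by (simp add: has_field_derivative_def)
  then show "pd_u f y = f' (1,0)" unfolding pd_u_def by (rule DERIV_imp_deriv)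
  have i2: "((\<lambda>s. (fst y, s)) has_derivative (\<lambda>h. (0, h))) (at (snd y))"
    by (auto intro!: derivative_eq_intros)
  have d2: "(f has_derivative f') (at ((\<lambda>s. (fst y, s)) (snd y)))" using d by simp
  have "((\<lambda>s. f (fst y, s)) has_derivative (\<lambda>h. f' (0, h))) (at (snd y))"
    using diff_chain_at[OF i2 d2] by (simp add: o_def)
  moreover have "(\<lambda>h. f' (0, h)) = (\<lambda>h. f' (0,1) * h)"
  proof
    fix h :: real
    have "f' (0, h) = f' (h *\<^sub>R (0,1))" by simp
    also have "\<dots> = h *\<^sub>R f' (0,1)" using lin by (rule linear_scale)
    finally show "f' (0, h) = f' (0,1) * h" by simp
  qed
  ultimately have "((\<lambda>s. f (fst y, s)) has_real_derivative f' (0,1)) (at (snd y))"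
    by (simp add: has_field_derivative_def)
  then show "pd_v f y = f' (0,1)" unfolding pd_v_def by (rule DERIV_imp_deriv)
qed

lemma dfst:
  assumes "(f has_real_derivative d) (at (fst w))"
  shows "((\<lambda>w. f (fst w)) has_derivative (\<lambda>h. fst h * d)) (at w)"
proof -
  have "((\<lambda>w. fst w) has_derivative fst) (at w)" by (rule has_derivative_fst[OF has_derivative_ident])
  from DERIV_compose_FDERIV[OF assms this] show ?thesis by simp
qed

lemma dsnd:
  assumes "(f has_real_derivative d) (at (snd w))"
  shows "((\<lambda>w. f (snd w)) has_derivative (\<lambda>h. snd h * d)) (at w)"
proof -
  have "((\<lambda>w. snd w) has_derivative snd) (at w)" by (rule has_derivative_snd[OF has_derivative_ident])
  from DERIV_compose_FDERIV[OF assms this] show ?thesis by simp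
qed

lemma BI_alg:
  fixes a1 a2 a3 b1 b2 b3 A1 A2 A3 B1 B2 B3 :: real
  assumes na: "a1^2 + a2^2 - a3^2 = 0" and nb: "b1^2 + b2^2 - b3^2 = 0"
    and D: "a2*b3 - a3*b2 \<noteq> 0"
  defines "D0 \<equiv> a2*b3 - a3*b2"
  defines "P \<equiv> a1*b3 - a3*b1" and "Q \<equiv> a2*b1 - a1*b2"
  defines "Ps \<equiv> A1*b3 - A3*b1" and "Pt \<equiv> a1*B3 - a3*B1"
  defines "Qs \<equiv> A2*b1 - A1*b2" and "Qt \<equiv> a2*B1 - a1*B2"
  defines "Ds \<equiv> A2*b3 - A3*b2" and "Dt \<equiv> a2*B3 - a3*B2"
  shows "(1 - (Q/D0)^2) * ((b3/D0) * ((Ps*D0 - P*Ds)/D0^2) + (-a3/D0) * ((Pt*D0 - P*Dt)/D0^2))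
       + 2 * (P/D0) * (Q/D0) * ((b3/D0) * ((Qs*D0 - Q*Ds)/D0^2) + (-a3/D0) * ((Qt*D0 - Q*Dt)/D0^2))
       - (1 + (P/D0)^2) * ((-b2/D0) * ((Qs*D0 - Q*Ds)/D0^2) + (a2/D0) * ((Qt*D0 - Q*Dt)/D0^2)) = 0"
proof -
  have D0: "D0 \<noteq> 0" using D by (simp add: D0_def)
  have "(1 - (Q/D0)^2) * ((b3/D0) * ((Ps*D0 - P*Ds)/D0^2) + (-a3/D0) * ((Pt*D0 - P*Dt)/D0^2))
       + 2 * (P/D0) * (Q/D0) * ((b3/D0) * ((Qs*D0 - Q*Ds)/D0^2) + (-a3/D0) * ((Qt*D0 - Q*Dt)/D0^2))
       - (1 + (P/D0)^2) * ((-b2/D0) * ((Qs*D0 - Q*Ds)/D0^2) + (a2/D0) * ((Qt*D0 - Q*Dt)/D0^2))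
     
     = ((D0^2 - Q^2) * ((Ps*D0 - P*Ds) * b3 - (Pt*D0 - P*Dt) * a3)
       + 2 * P * Q * ((Qs*D0 - Q*Ds) * b3 - (Qt*D0 - Q*Dt) * a3)
       - (D0^2 + P^2) * ((Qt*D0 - Q*Dt) * a2 - (Qs*D0 - Q*Ds) * b2)) / D0^5"
    using D0 by (simp add: field_simps power2_eq_square power_def)
  also have "... = 0"
  proof -
    have "(D0^2 - Q^2) * ((Ps*D0 - P*Ds) * b3 - (Pt*D0 - P*Dt) * a3)
       + 2 * P * Q * ((Qs*D0 - Q*Ds) * b3 - (Qt*D0 - Q*Dt) * a3)
       - (D0^2 + P^2) * ((Qt*D0 - Q*Dt) * a2 - (Qs*D0 - Q*Ds) * b2) = 0"
      using na nb unfolding D0_def P_def Q_def Ps_def Pt_def Qs_def Qt_def Ds_def Dt_def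
      by algebra
    then show ?thesis by simp
  qed
  finally show ?thesis .
qed

definition lin2 :: "real \<Rightarrow> real \<Rightarrow> real \<Rightarrow> real \<Rightarrow> real \<times> real \<Rightarrow> real \<times> real" where
  "lin2 c1 c2 c3 c4 h = (fst h * c1 + snd h * c2, fst h * c3 + snd h * c4)"

lemma bl_lin2: "bounded_linear (lin2 c1 c2 c3 c4)"
proof -
  have "((lin2 c1 c2 c3 c4) has_derivative (lin2 c1 c2 c3 c4)) (at 0)"
    unfolding lin2_def by (auto intro!: derivative_eq_intros)
  then show ?thesis using has_derivative_bounded_linear by blast
qed

lemma lin2_inv:
  assumes d: "d = a2*b3 - a3*b2" "d \<noteq> 0"
  shows "lin2 (b3/d) (-b2/d) (-a3/d) (a2/d) (lin2 a2 b2 a3 b3 x) = x"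
proof -
  obtain u v where x: "x = (u, v)" by fastforce
  have "(u * a2 + v * b2) * (b3 / d) + (u * a3 + v * b3) * (- b2 / d) = u"
    using d by (simp add: field_simps) algebra
  moreover have "(u * a2 + v * b2) * (- a3 / d) + (u * a3 + v * b3) * (a2 / d) = v"
    using d by (simp add: field_simps) algebra
  ultimately show ?thesis by (simp add: x lin2_def)
qed

lemma lin2_inv':
  assumes d: "d = a2*b3 - a3*b2" "d \<noteq> 0"
  shows "lin2 a2 b2 a3 b3 (lin2 (b3/d) (-b2/d) (-a3/d) (a2/d) x) = x"
proof -
  obtain u v where x: "x = (u, v)" by fastforce
  have "(u * (b3 / d) + v * (- b2 / d)) * a2 + (u * (- a3 / d) + v * (a2 / d)) * b2 = u"
    using d by (simp add: field_simps) algebra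
  moreover have "(u * (b3 / d) + v * (- b2 / d)) * a3 + (u * (- a3 / d) + v * (a2 / d)) * b3 = v"
    using d by (simp add: field_simps) algebra
  ultimately show ?thesis by (simp add: x lin2_def)
qed

lemma dcross:
  assumes "(p has_real_derivative p') (at (fst w))" "(q has_real_derivative q') (at (fst w))"
    "(r has_real_derivative r') (at (snd w))" "(t has_real_derivative t') (at (snd w))"
  shows "((\<lambda>w. p (fst w) * r (snd w) - q (fst w) * t (snd w)) has_derivative
     (\<lambda>h. fst h * (p' * r (snd w) - q' * t (snd w)) + snd h * (p (fst w) * r' - q (fst w) * t'))) (at w)"
  by (rule has_derivative_eq_rhs,
      (rule has_derivative_diff has_derivative_mult dfst dsnd assms)+)
     (simp add: fun_eq_iff algebra_simps)

lemma dquot: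
  fixes P D :: "real \<times> real \<Rightarrow> real"
  assumes "(P has_derivative (\<lambda>h. fst h * Ps + snd h * Pt)) (at w)"
    "(D has_derivative (\<lambda>h. fst h * Ds + snd h * Dt)) (at w)" "D w \<noteq> 0"
  shows "((\<lambda>w. P w / D w) has_derivative
     (\<lambda>h. fst h * ((Ps * D w - P w * Ds) / (D w)^2) + snd h * ((Pt * D w - P w * Dt) / (D w)^2))) (at w)"
  by (rule has_derivative_eq_rhs, rule has_derivative_divide'[OF assms])
     (use assms(3) in \<open>simp add: fun_eq_iff field_simps power2_eq_square\<close>)

lemma BI_local:
  fixes f1 f2 f3 g1 g2 g3 a1 a2 a3 b1 b2 b3 A1 A2 A3 B1 B2 B3 :: "real \<Rightarrow> real"
    and Om :: "(real \<times> real) set" and S T :: "real set" and w0 :: "real \<times> real"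
  assumes Om: "open Om" "w0 \<in> Om" "Om \<subseteq> S \<times> T"
    and df1: "\<And>s. s \<in> S \<Longrightarrow> (f1 has_real_derivative a1 s) (at s)"
    and df2: "\<And>s. s \<in> S \<Longrightarrow> (f2 has_real_derivative a2 s) (at s)"
    and df3: "\<And>s. s \<in> S \<Longrightarrow> (f3 has_real_derivative a3 s) (at s)"
    and da1: "\<And>s. s \<in> S \<Longrightarrow> (a1 has_real_derivative A1 s) (at s)"
    and da2: "\<And>s. s \<in> S \<Longrightarrow> (a2 has_real_derivative A2 s) (at s)"
    and da3: "\<And>s. s \<in> S \<Longrightarrow> (a3 has_real_derivative A3 s) (at s)"
    and dg1: "\<And>t. t \<in> T \<Longrightarrow> (g1 has_real_derivative b1 t) (at t)"
    and dg2: "\<And>t. t \<in> T \<Longrightarrow> (g2 has_real_derivative b2 t) (at t)"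
    and dg3: "\<And>t. t \<in> T \<Longrightarrow> (g3 has_real_derivative b3 t) (at t)"
    and db1: "\<And>t. t \<in> T \<Longrightarrow> (b1 has_real_derivative B1 t) (at t)"
    and db2: "\<And>t. t \<in> T \<Longrightarrow> (b2 has_real_derivative B2 t) (at t)"
    and db3: "\<And>t. t \<in> T \<Longrightarrow> (b3 has_real_derivative B3 t) (at t)"
    and na: "\<And>s. s \<in> S \<Longrightarrow> (a1 s)^2 + (a2 s)^2 - (a3 s)^2 = 0"
    and nb: "\<And>t. t \<in> T \<Longrightarrow> (b1 t)^2 + (b2 t)^2 - (b3 t)^2 = 0"
    and D0: "a2 (fst w0) * b3 (snd w0) - a3 (fst w0) * b2 (snd w0) \<noteq> 0"
  shows "\<exists>W V \<psi>. open W \<and> w0 \<in> W \<and> W \<subseteq> Om \<and> born_infeld_soliton \<psi> V \<and>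
     (\<lambda>w. (f1 (fst w) + g1 (snd w), f2 (fst w) + g2 (snd w), f3 (fst w) + g3 (snd w))) ` W
       = (\<lambda>q. (\<psi> q, fst q, snd q)) ` V"
proof -
  have inS: "fst w \<in> S" "snd w \<in> T" if "w \<in> Om" for w using Om(3) that by auto
  have HS: "((\<lambda>w. \<phi> (fst w)) has_derivative (\<lambda>h. fst h * \<phi>' (fst w))) (at w)"
    if "\<And>s. s \<in> S \<Longrightarrow> (\<phi> has_real_derivative \<phi>' s) (at s)" "w \<in> Om" for \<phi> \<phi>' w
    using dfst that inS by blast
  have HT: "((\<lambda>w. \<phi> (snd w)) has_derivative (\<lambda>h. snd h * \<phi>' (snd w))) (at w)"
    if "\<And>t. t \<in> T \<Longrightarrow> (\<phi> has_real_derivative \<phi>' t) (at t)" "w \<in> Om" for \<phi> \<phi>' w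
    using dsnd that inS by blast
  have CS: "continuous_on Om (\<lambda>w. \<phi> (fst w))"
    if "\<And>s. s \<in> S \<Longrightarrow> (\<phi> has_real_derivative \<phi>' s) (at s)" for \<phi> \<phi>'
    using HS[OF that] has_derivative_continuous continuous_at_imp_continuous_on by blast
  have CT: "continuous_on Om (\<lambda>w. \<phi> (snd w))"
    if "\<And>t. t \<in> T \<Longrightarrow> (\<phi> has_real_derivative \<phi>' t) (at t)" for \<phi> \<phi>'
    using HT[OF that] has_derivative_continuous continuous_at_imp_continuous_on by blast

  define Dw where "Dw w = a2 (fst w) * b3 (snd w) - a3 (fst w) * b2 (snd w)" for w
  define Pf where "Pf w = a1 (fst w) * b3 (snd w) - a3 (fst w) * b1 (snd w)" for w
  define Qf where "Qf w = a2 (fst w) * b1 (snd w) - a1 (fst w) * b2 (snd w)" for w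
  define Ps where "Ps w = A1 (fst w) * b3 (snd w) - A3 (fst w) * b1 (snd w)" for w
  define Pt where "Pt w = a1 (fst w) * B3 (snd w) - a3 (fst w) * B1 (snd w)" for w
  define Qs where "Qs w = A2 (fst w) * b1 (snd w) - A1 (fst w) * b2 (snd w)" for w
  define Qt where "Qt w = a2 (fst w) * B1 (snd w) - a1 (fst w) * B2 (snd w)" for w
  define Ds where "Ds w = A2 (fst w) * b3 (snd w) - A3 (fst w) * b2 (snd w)" for w
  define Dt where "Dt w = a2 (fst w) * B3 (snd w) - a3 (fst w) * B2 (snd w)" for w

  have dD: "(Dw has_derivative (\<lambda>h. fst h * Ds w + snd h * Dt w)) (at w)" if "w \<in> Om" for w
    unfolding Dw_def[abs_def] Ds_def Dt_def
    by (rule dcross) (use da2 da3 db3 db2 inS[OF that] in auto)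
  have dPf: "(Pf has_derivative (\<lambda>h. fst h * Ps w + snd h * Pt w)) (at w)" if "w \<in> Om" for w
    unfolding Pf_def[abs_def] Ps_def Pt_def
    by (rule dcross) (use da1 da3 db3 db1 inS[OF that] in auto)
  have dQf: "(Qf has_derivative (\<lambda>h. fst h * Qs w + snd h * Qt w)) (at w)" if "w \<in> Om" for w
    unfolding Qf_def[abs_def] Qs_def Qt_def
    by (rule dcross) (use da2 da1 db1 db2 inS[OF that] in auto)
  have cD: "continuous_on Om Dw"
    using dD has_derivative_continuous continuous_at_imp_continuous_on by blast
  define Om' where "Om' = Om \<inter> Dw -` (-{0})"
  have oO': "open Om'" unfolding Om'_def by (rule continuous_open_preimage[OF cD Om(1)]) auto
  have w0O': "w0 \<in> Om'" using Om(2) D0 by (simp add: Om'_def Dw_def)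
  have OmO: "Om' \<subseteq> Om" by (auto simp: Om'_def)
  have DO': "Dw w \<noteq> 0" if "w \<in> Om'" for w using that by (auto simp: Om'_def)

  define Phi where "Phi w = (f2 (fst w) + g2 (snd w), f3 (fst w) + g3 (snd w))" for w
  define Phi' where "Phi' w = lin2 (a2 (fst w)) (b2 (snd w)) (a3 (fst w)) (b3 (snd w))" for w
  have dPhi: "(Phi has_derivative Phi' w) (at w)" if "w \<in> Om" for w
  proof -
    have "((\<lambda>w. (f2 (fst w) + g2 (snd w), f3 (fst w) + g3 (snd w))) has_derivative
      (\<lambda>h. (fst h * a2 (fst w) + snd h * b2 (snd w), fst h * a3 (fst w) + snd h * b3 (snd w)))) (at w)"
      by (intro has_derivative_Pair has_derivative_add HS[OF df2 that] HT[OF dg2 that]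
          HS[OF df3 that] HT[OF dg3 that])
    then show ?thesis by (simp add: Phi_def[abs_def] Phi'_def lin2_def[abs_def])
  qed
  have blP: "bounded_linear (Phi' w)" for w by (simp add: Phi'_def bl_lin2)
  have fLa: "blinfun_apply (Blinfun (Phi' w)) = Phi' w" for w
    using bounded_linear_Blinfun_apply[OF blP] .
  have dPhi2: "(Phi has_derivative blinfun_apply (Blinfun (Phi' w))) (at w)" if "w \<in> Om'" for w
    using dPhi[of w] that OmO by (auto simp: fLa)
  have cfL: "continuous_on Om' (\<lambda>w. Blinfun (Phi' w))"
  proof (rule continuous_on_blinfun_componentwise)
    fix i :: "real \<times> real" assume "i \<in> Basis"
    then have i: "i = (1,0) \<or> i = (0,1)" by (auto simp: Basis_prod_def)
    have c1: "continuous_on Om' (\<lambda>w. Phi' w (1,0))"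
      unfolding Phi'_def lin2_def
      by (simp, intro continuous_on_Pair continuous_on_subset[OF CS[OF da2] OmO]
          continuous_on_subset[OF CS[OF da3] OmO])
    have c2: "continuous_on Om' (\<lambda>w. Phi' w (0,1))"
      unfolding Phi'_def lin2_def
      by (simp, intro continuous_on_Pair continuous_on_subset[OF CT[OF db2] OmO]
          continuous_on_subset[OF CT[OF db3] OmO])
    show "continuous_on Om' (\<lambda>w. blinfun_apply (Blinfun (Phi' w)) i)"
      using i c1 c2 by (auto simp: fLa)
  qed
  define ginv where "ginv w = lin2 (b3 (snd w) / Dw w) (- b2 (snd w) / Dw w) (- a3 (fst w) / Dw w) (a2 (fst w) / Dw w)" for w
  have ginv1: "ginv w (Phi' w x) = x" if "Dw w \<noteq> 0" for w x
    unfolding ginv_def Phi'_def by (rule lin2_inv) (use that in \<open>auto simp: Dw_def\<close>)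
  have blg: "bounded_linear (ginv w)" for w by (simp add: ginv_def bl_lin2)
  have inv0: "Blinfun (ginv w0) o\<^sub>L Blinfun (Phi' w0) = id_blinfun"
    by (rule blinfun_eqI) (simp add: bounded_linear_Blinfun_apply[OF blg] fLa ginv1 DO'[OF w0O'])
  obtain U' V g g' where IFT: "open U'" "U' \<subseteq> Om'" "w0 \<in> U'" "open V" "Phi w0 \<in> V"
    "homeomorphism U' V Phi g"
    "\<And>y. y \<in> V \<Longrightarrow> (g has_derivative g' y) (at y)"
    "\<And>y. y \<in> V \<Longrightarrow> g' y = inv (blinfun_apply (Blinfun (Phi' (g y))))"
    "\<And>y. y \<in> V \<Longrightarrow> bij (blinfun_apply (Blinfun (Phi' (g y))))"
    using inverse_function_theorem[OF oO' dPhi2 cfL w0O' inv0] by blast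
  have gPhi: "\<And>w. w \<in> U' \<Longrightarrow> g (Phi w) = w" and PhiU: "Phi ` U' = V"
    and Phig: "\<And>y. y \<in> V \<Longrightarrow> Phi (g y) = y" and gV: "g ` V = U'"
    using IFT(6) unfolding homeomorphism_def by auto
  have gU: "g y \<in> U'" if "y \<in> V" for y using gV that by blast
  have gO': "g y \<in> Om'" if "y \<in> V" for y using gU[OF that] IFT(2) by blast
  have gO: "g y \<in> Om" if "y \<in> V" for y using gO'[OF that] OmO by blast
  have dg: "(g has_derivative ginv (g y)) (at y)" if y: "y \<in> V" for y
  proof -
    have "g' y = ginv (g y)"
    proof
      fix h
      have bij: "bij (Phi' (g y))" using IFT(9)[OF y] by (simp add: fLa)
      have e: "Phi' (g y) (inv (Phi' (g y)) h) = h" using bij by (simp add: bij_is_surj surj_f_inv_f)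
      have "g' y h = inv (Phi' (g y)) h" using IFT(8)[OF y] by (simp add: fLa)
      also have "\<dots> = ginv (g y) (Phi' (g y) (inv (Phi' (g y)) h))"
        by (rule ginv1[symmetric]) (rule DO'[OF gO'[OF y]])
      also have "\<dots> = ginv (g y) h" using e by simp
      finally show "g' y h = ginv (g y) h" .
    qed
    with IFT(7)[OF y] show ?thesis by simp
  qed
  define \<psi> where "\<psi> y = f1 (fst (g y)) + g1 (snd (g y))" for y
  have dF1: "((\<lambda>w. f1 (fst w) + g1 (snd w)) has_derivative (\<lambda>k. fst k * a1 (fst w) + snd k * b1 (snd w))) (at w)"
    if "w \<in> Om" for w
    by (intro has_derivative_add HS[OF df1 that] HT[OF dg1 that])
  have dpsi: "(\<psi> has_derivative (\<lambda>h. fst (ginv (g y) h) * a1 (fst (g y)) + snd (ginv (g y) h) * b1 (snd (g y)))) (at y)"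
    if y: "y \<in> V" for y
    using diff_chain_at[OF dg[OF y] dF1[OF gO[OF y]]] by (simp add: \<psi>_def[abs_def] o_def)
  have pd1: "pd_u \<psi> y = Pf (g y) / Dw (g y)" "pd_v \<psi> y = Qf (g y) / Dw (g y)" if y: "y \<in> V" for y
    using pd_from_deriv[OF dpsi[OF y]] DO'[OF gO'[OF y]]
    by (simp_all add: ginv_def lin2_def Pf_def Qf_def field_simps)
  have dal: "((\<lambda>w. Pf w / Dw w) has_derivative (\<lambda>h. fst h * ((Ps w * Dw w - Pf w * Ds w) / (Dw w)^2)
      + snd h * ((Pt w * Dw w - Pf w * Dt w) / (Dw w)^2))) (at w)" if "w \<in> Om'" for w
    by (rule dquot[OF dPf dD DO'[OF that]]) (use that OmO in auto)
  have dbe: "((\<lambda>w. Qf w / Dw w) has_derivative (\<lambda>h. fst h * ((Qs w * Dw w - Qf w * Ds w) / (Dw w)^2)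
      + snd h * ((Qt w * Dw w - Qf w * Dt w) / (Dw w)^2))) (at w)" if "w \<in> Om'" for w
    by (rule dquot[OF dQf dD DO'[OF that]]) (use that OmO in auto)
  have dpu: "(pd_u \<psi> has_derivative (\<lambda>h. fst (ginv (g y) h) * ((Ps (g y) * Dw (g y) - Pf (g y) * Ds (g y)) / (Dw (g y))^2)
      + snd (ginv (g y) h) * ((Pt (g y) * Dw (g y) - Pf (g y) * Dt (g y)) / (Dw (g y))^2))) (at y)"
    if y: "y \<in> V" for y
  proof -
    have "(((\<lambda>w. Pf w / Dw w) \<circ> g) has_derivative (\<lambda>h. fst (ginv (g y) h) * ((Ps (g y) * Dw (g y) - Pf (g y) * Ds (g y)) / (Dw (g y))^2)
      + snd (ginv (g y) h) * ((Pt (g y) * Dw (g y) - Pf (g y) * Dt (g y)) / (Dw (g y))^2))) (at y)"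
      using diff_chain_at[OF dg[OF y] dal[OF gO'[OF y]]] by (simp add: o_def)
    then show ?thesis
      by (rule has_derivative_transform_within_open[OF _ IFT(4) y]) (simp add: pd1)
  qed
  have dpv: "(pd_v \<psi> has_derivative (\<lambda>h. fst (ginv (g y) h) * ((Qs (g y) * Dw (g y) - Qf (g y) * Ds (g y)) / (Dw (g y))^2)
      + snd (ginv (g y) h) * ((Qt (g y) * Dw (g y) - Qf (g y) * Dt (g y)) / (Dw (g y))^2))) (at y)"
    if y: "y \<in> V" for y
  proof -
    have "(((\<lambda>w. Qf w / Dw w) \<circ> g) has_derivative (\<lambda>h. fst (ginv (g y) h) * ((Qs (g y) * Dw (g y) - Qf (g y) * Ds (g y)) / (Dw (g y))^2)
      + snd (ginv (g y) h) * ((Qt (g y) * Dw (g y) - Qf (g y) * Dt (g y)) / (Dw (g y))^2))) (at y)"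
      using diff_chain_at[OF dg[OF y] dbe[OF gO'[OF y]]] by (simp add: o_def)
    then show ?thesis
      by (rule has_derivative_transform_within_open[OF _ IFT(4) y]) (simp add: pd1)
  qed
  have BI: "born_infeld_soliton \<psi> V"
    unfolding born_infeld_soliton_def
  proof (intro conjI ballI)
    show "open V" by (rule IFT(4))
    show "\<psi> differentiable_on V"
      using dpsi differentiableI differentiable_at_imp_differentiable_on by blast
    show "pd_u \<psi> differentiable_on V"
      using dpu differentiableI differentiable_at_imp_differentiable_on by blast
    show "pd_v \<psi> differentiable_on V"
      using dpv differentiableI differentiable_at_imp_differentiable_on by blast
  next
    fix y assume y: "y \<in> V"
    define w where "w = g y"
    have wS: "fst w \<in> S" "snd w \<in> T" using inS gO[OF y] by (auto simp: w_def)
    have Dn: "Dw w \<noteq> 0" using DO'[OF gO'[OF y]] by (simp add: w_def)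
    note e = pd_from_deriv[OF dpu[OF y]] pd_from_deriv[OF dpv[OF y]] pd1[OF y]
    have "(1 - (pd_v \<psi> y)\<^sup>2) * pd_u (pd_u \<psi>) y + 2 * pd_u \<psi> y * pd_v \<psi> y * pd_u (pd_v \<psi>) y -
        (1 + (pd_u \<psi> y)\<^sup>2) * pd_v (pd_v \<psi>) y =
      (1 - (Qf w / Dw w)^2) * ((b3 (snd w) / Dw w) * ((Ps w * Dw w - Pf w * Ds w) / (Dw w)^2) + (- a3 (fst w) / Dw w) * ((Pt w * Dw w - Pf w * Dt w) / (Dw w)^2))
      + 2 * (Pf w / Dw w) * (Qf w / Dw w) * ((b3 (snd w) / Dw w) * ((Qs w * Dw w - Qf w * Ds w) / (Dw w)^2) + (- a3 (fst w) / Dw w) * ((Qt w * Dw w - Qf w * Dt w) / (Dw w)^2))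
      - (1 + (Pf w / Dw w)^2) * ((- b2 (snd w) / Dw w) * ((Qs w * Dw w - Qf w * Ds w) / (Dw w)^2) + (a2 (fst w) / Dw w) * ((Qt w * Dw w - Qf w * Dt w) / (Dw w)^2))"
      unfolding e w_def by (simp add: ginv_def lin2_def)
    also have "\<dots> = 0"
      unfolding Dw_def Pf_def Qf_def Ps_def Pt_def Qs_def Qt_def Ds_def Dt_def
      by (rule BI_alg[OF na[OF wS(1)] nb[OF wS(2)] Dn[unfolded Dw_def]])
    finally show "(1 - (pd_v \<psi> y)\<^sup>2) * pd_u (pd_u \<psi>) y + 2 * pd_u \<psi> y * pd_v \<psi> y * pd_u (pd_v \<psi>) y -
        (1 + (pd_u \<psi> y)\<^sup>2) * pd_v (pd_v \<psi>) y = 0" .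
  qed
  have img: "(\<lambda>w. (f1 (fst w) + g1 (snd w), f2 (fst w) + g2 (snd w), f3 (fst w) + g3 (snd w))) ` U'
       = (\<lambda>q. (\<psi> q, fst q, snd q)) ` V"
  proof (intro equalityI subsetI)
    fix x assume "x \<in> (\<lambda>w. (f1 (fst w) + g1 (snd w), f2 (fst w) + g2 (snd w), f3 (fst w) + g3 (snd w))) ` U'"
    then obtain w where w: "w \<in> U'" and x: "x = (f1 (fst w) + g1 (snd w), f2 (fst w) + g2 (snd w), f3 (fst w) + g3 (snd w))"
      by blast
    have "x = (\<lambda>q. (\<psi> q, fst q, snd q)) (Phi w)" using gPhi[OF w] by (simp add: x \<psi>_def Phi_def)
    moreover have "Phi w \<in> V" using PhiU w by blast
    ultimately show "x \<in> (\<lambda>q. (\<psi> q, fst q, snd q)) ` V" by blast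
  next
    fix x assume "x \<in> (\<lambda>q. (\<psi> q, fst q, snd q)) ` V"
    then obtain q where q: "q \<in> V" and x: "x = (\<psi> q, fst q, snd q)" by blast
    have "Phi (g q) = q" using Phig[OF q] .
    then have "x = (\<lambda>w. (f1 (fst w) + g1 (snd w), f2 (fst w) + g2 (snd w), f3 (fst w) + g3 (snd w))) (g q)"
      by (auto simp: x \<psi>_def Phi_def)
    then show "x \<in> (\<lambda>w. (f1 (fst w) + g1 (snd w), f2 (fst w) + g2 (snd w), f3 (fst w) + g3 (snd w))) ` U'"
      using gU[OF q] by blast
  qed
  show ?thesis
    using IFT(1,2,3) OmO BI img by blast
qed

lemma lprod_add_left: "lprod (x + y) z = lprod x z + lprod y z"
  by (simp add: lprod_def algebra_simps)
lemma lprod_add_right: "lprod z (x + y) = lprod z x + lprod z y"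
  by (simp add: lprod_def algebra_simps)
lemma lprod_diff_left: "lprod (x - y) z = lprod x z - lprod y z"
  by (simp add: lprod_def algebra_simps)
lemma lprod_diff_right: "lprod z (x - y) = lprod z x - lprod z y"
  by (simp add: lprod_def algebra_simps)
lemma lprod_scaleR_left: "lprod (k *\<^sub>R x) z = k * lprod x z"
  by (simp add: lprod_def algebra_simps)
lemma lprod_scaleR_right: "lprod z (k *\<^sub>R x) = k * lprod z x"
  by (simp add: lprod_def algebra_simps)

lemmas lprod_lin = lprod_add_left lprod_add_right lprod_diff_left lprod_diff_right
  lprod_scaleR_left lprod_scaleR_right

lemma null_plus:
  assumes "lprod n n = 1" "lprod n d = 0"
  shows "lprod ((1/2) *\<^sub>R (d + lcross n d)) ((1/2) *\<^sub>R (d + lcross n d)) = 0"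
proof -
  have "lprod (lcross n d) (lcross n d) = - lprod d d"
    using assms by (simp add: lprod_lcross_self)
  moreover have "lprod (lcross n d) d = 0" by (rule lprod_lcross2)
  ultimately show ?thesis by (simp add: lprod_lin lprod_sym[of d "lcross n d"])
qed

lemma null_minus:
  assumes "lprod n n = 1" "lprod n d = 0"
  shows "lprod ((1/2) *\<^sub>R (d - lcross n d)) ((1/2) *\<^sub>R (d - lcross n d)) = 0"
proof -
  have "lprod (lcross n d) (lcross n d) = - lprod d d"
    using assms by (simp add: lprod_lcross_self)
  moreover have "lprod (lcross n d) d = 0" by (rule lprod_lcross2)
  ultimately show ?thesis by (simp add: lprod_lin lprod_sym[of d "lcross n d"])
qed

lemma prod_ab:
  assumes "lprod n n = 1" "lprod n d = 0"
  shows "lprod ((1/2) *\<^sub>R (d + lcross n d)) ((1/2) *\<^sub>R (d - lcross n d)) = (1/2) * lprod d d"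
proof -
  have "lprod (lcross n d) (lcross n d) = - lprod d d"
    using assms by (simp add: lprod_lcross_self)
  moreover have "lprod (lcross n d) d = 0" by (rule lprod_lcross2)
  ultimately show ?thesis by (simp add: lprod_lin lprod_sym[of d "lcross n d"])
qed

lemma cross_ab:
  assumes "lprod n d = 0"
  shows "lcross ((1/2) *\<^sub>R (d + lcross n d)) ((1/2) *\<^sub>R (d - lcross n d)) = ((1/2) * lprod d d) *\<^sub>R n"
proof -
  have "lcross (lcross n d) d = lprod d d *\<^sub>R n - lprod n d *\<^sub>R d" by (rule lcross_lcross)
  then have e: "lcross (lcross n d) d = lprod d d *\<^sub>R n" using assms by simp
  have "lcross ((1/2) *\<^sub>R (d + lcross n d)) ((1/2) *\<^sub>R (d - lcross n d))
      = (1/2) *\<^sub>R lcross (lcross n d) d"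
    unfolding vec3_eq lcross_nth vector_add_component vector_minus_component vector_scaleR_component real_scaleR_def
    by (intro conjI; algebra)
  then show ?thesis using e by simp
qed

lemma reg_alg:
  assumes "lprod a a = 0" "lprod b b = 0" "lprod a b \<noteq> 0"
  shows "a + b \<noteq> 0" "a - b \<noteq> k *\<^sub>R (a + b)"
proof -
  show "a + b \<noteq> 0"
  proof
    assume "a + b = 0"
    then have "b = - a" by (simp add: eq_neg_iff_add_eq_0 add.commute)
    then have "lprod a b = - lprod a a" by (simp add: lprod_def)
    with assms show False by simp
  qed
  show "a - b \<noteq> k *\<^sub>R (a + b)"
  proof
    assume h: "a - b = k *\<^sub>R (a + b)"
    then have "lprod (a - b) a = lprod (k *\<^sub>R (a + b)) a" by simp
    then have "- lprod a b = k * lprod a b" using assms by (simp add: lprod_lin lprod_sym[of b a])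
    then have "(k + 1) * lprod a b = 0" by (simp add: algebra_simps)
    then have k: "k = -1" using assms(3) by simp
    then have "a - b = - a - b" using h by (simp add: algebra_simps)
    then have "\<forall>i. a $ i = 0" by (simp add: vec_eq_iff)
    then have "a = 0" by (simp add: vec_eq_iff)
    then show False using assms(3) by (simp add: lprod_def)
  qed
qed


lemma normal_alg:
  assumes "lprod a a = 0" "lprod b b = 0" "lprod a b \<noteq> 0"
  shows "lprod ((1 / lprod a b) *\<^sub>R lcross a b) (a + b) = 0"
    "lprod ((1 / lprod a b) *\<^sub>R lcross a b) (a - b) = 0"
    "lprod ((1 / lprod a b) *\<^sub>R lcross a b) ((1 / lprod a b) *\<^sub>R lcross a b) = 1"
proof -
  show "lprod ((1 / lprod a b) *\<^sub>R lcross a b) (a + b) = 0"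
    by (simp add: lprod_lin lprod_lcross1 lprod_lcross2)
  show "lprod ((1 / lprod a b) *\<^sub>R lcross a b) (a - b) = 0"
    by (simp add: lprod_lin lprod_lcross1 lprod_lcross2)
  show "lprod ((1 / lprod a b) *\<^sub>R lcross a b) ((1 / lprod a b) *\<^sub>R lcross a b) = 1"
    using assms by (simp add: lprod_lin lprod_lcross_self power2_eq_square)
qed

lemma nu12:
  assumes "lprod a a = 0" "lprod b b = 0" "lprod a b \<noteq> 0"
  shows "lcross a b $ 1 \<noteq> 0 \<or> lcross a b $ 2 \<noteq> 0"
proof (rule ccontr)
  define v where "v = lcross a b"
  assume "\<not> ?thesis"
  then have z: "v $ 1 = 0" "v $ 2 = 0" unfolding v_def by auto
  have e1: "lprod v v = (lprod a b)^2" using assms unfolding v_def by (simp add: lprod_lcross_self)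
  have e2: "lprod v v = - (v $ 3 * v $ 3)" using z unfolding lprod_def by simp
  have "(lprod a b) * (lprod a b) + v $ 3 * v $ 3 = 0" using e1 e2 unfolding power2_eq_square by linarith
  then have "lprod a b = 0" by (simp add: sum_squares_eq_zero_iff)
  with assms show False by simp
qed

lemma continuous_on_lcross:
  assumes "continuous_on S A" "continuous_on S B"
  shows "continuous_on S (\<lambda>p. lcross (A p) (B p))"
proof -
  have "continuous_on S (\<lambda>p. \<chi> i. lcross (A p) (B p) $ i)"
  proof (rule continuous_on_vec_lambda)
    fix i :: 3
    have "i = 1 \<or> i = 2 \<or> i = 3" by (rule exhaust_3)
    then show "continuous_on S (\<lambda>p. lcross (A p) (B p) $ i)"
      using assms by (elim disjE; simp; intro continuous_intros continuous_on_component assms)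
  qed
  then show ?thesis by simp
qed

lemma continuous_on_lprod:
  assumes "continuous_on S A" "continuous_on S B"
  shows "continuous_on S (\<lambda>p. lprod (A p) (B p))"
  unfolding lprod_def using assms by (auto intro!: continuous_intros)

lemma vec3_repr: "(x::real^3) = vector [x$1, x$2, x$3]"
  by (simp add: vec3_eq)

lemma graph_x_img: "graph_x \<psi> V = (\<lambda>q. vector [\<psi> q, fst q, snd q]) ` V"
  unfolding graph_x_def
proof (intro equalityI subsetI)
  fix x assume "x \<in> {vector [\<psi> (y, z), y, z] |y z. (y, z) \<in> V}"
  then obtain y z where "(y,z) \<in> V" "x = vector [\<psi> (y,z), y, z]" by blast
  then show "x \<in> (\<lambda>q. vector [\<psi> q, fst q, snd q]) ` V" by force
next
  fix x assume "x \<in> (\<lambda>q. vector [\<psi> q, fst q, snd q]) ` V"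
  then obtain q where "q \<in> V" "x = vector [\<psi> q, fst q, snd q]" by blast
  then show "x \<in> {vector [\<psi> (y, z), y, z] |y z. (y, z) \<in> V}"
    by (intro CollectI exI[of _ "fst q"] exI[of _ "snd q"]) simp
qed

lemma graph_y_img: "graph_y \<psi> V = (\<lambda>q. vector [fst q, \<psi> q, snd q]) ` V"
  unfolding graph_y_def
proof (intro equalityI subsetI)
  fix x assume "x \<in> {vector [y, \<psi> (y, z), z] |y z. (y, z) \<in> V}"
  then obtain y z where "(y,z) \<in> V" "x = vector [y, \<psi> (y,z), z]" by blast
  then show "x \<in> (\<lambda>q. vector [fst q, \<psi> q, snd q]) ` V" by force
next
  fix x assume "x \<in> (\<lambda>q. vector [fst q, \<psi> q, snd q]) ` V"
  then obtain q where "q \<in> V" "x = vector [fst q, \<psi> q, snd q]" by blast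
  then show "x \<in> {vector [y, \<psi> (y, z), z] |y z. (y, z) \<in> V}"
    by (intro CollectI exI[of _ "fst q"] exI[of _ "snd q"]) simp
qed

theorem corollary2p1:
  fixes I :: "real set" and c n :: "real \<Rightarrow> real^3"
  assumes I: "open I" "is_interval I" "I \<noteq> {}"
    and c_an: "real_analytic_curve_on c I"
    and c_reg: "\<forall>t\<in>I. vector_derivative c (at t) \<noteq> 0"
    and c_type: "(\<forall>t\<in>I. lprod (vector_derivative c (at t)) (vector_derivative c (at t)) > 0)
               \<or> (\<forall>t\<in>I. lprod (vector_derivative c (at t)) (vector_derivative c (at t)) < 0)"
    and n_an: "real_analytic_curve_on n I"
    and n_unit: "\<forall>t\<in>I. lprod (n t) (n t) = 1"
    and n_normal: "\<forall>t\<in>I. lprod (n t) (vector_derivative c (at t)) = 0"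
  shows "\<exists>(\<Omega>::(real \<times> real) set) X N.
           open \<Omega> \<and> (\<lambda>t. (t, 0)) ` I \<subseteq> \<Omega> \<and>
           BI_general_surface X \<Omega> \<and> unit_normal_field X N \<Omega> \<and>
           (\<forall>t\<in>I. X (t, 0) = c t \<and> N (t, 0) = n t)"
proof -
  obtain t0 where t0: "t0 \<in> I" using I(3) by blast
  define dc where "dc = vd c"
  define ddc where "ddc = vd (vd c)"
  define dn where "dn = vd n"
  have c_d: "(c has_vector_derivative dc t) (at t)" if "t \<in> I" for t
    using analytic_curve_deriv(1)[OF c_an I(1) that] by (simp add: dc_def)
  have dc_an: "real_analytic_curve_on dc I"
    using analytic_curve_deriv(2)[OF c_an I(1)] by (simp add: dc_def)
  have dc_d: "(dc has_vector_derivative ddc t) (at t)" if "t \<in> I" for t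
    using analytic_curve_deriv(1)[OF dc_an I(1) that] by (simp add: ddc_def dc_def)
  have n_d: "(n has_vector_derivative dn t) (at t)" if "t \<in> I" for t
    using analytic_curve_deriv(1)[OF n_an I(1) that] by (simp add: dn_def)
  have vdc: "vector_derivative c (at t) = dc t" if "t \<in> I" for t
    using c_d[OF that] by (rule vector_derivative_at)
  have nunit: "lprod (n t) (n t) = 1" if "t \<in> I" for t using n_unit that by blast
  have nperp: "lprod (n t) (dc t) = 0" if "t \<in> I" for t using n_normal vdc[OF that] that by auto
  have ctype: "lprod (dc t) (dc t) \<noteq> 0" if "t \<in> I" for t
  proof -
    have "lprod (dc t) (dc t) > 0 \<or> lprod (dc t) (dc t) < 0" using c_type vdc[OF that] that by auto
    then show ?thesis by auto
  qed
  have dcdiff: "(\<lambda>s. dc s $ i) differentiable (at s)" if "s \<in> I" for s i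
    unfolding real_differentiable_def using vd_nth[OF dc_d[OF that]] by blast
  have ndiff: "(\<lambda>s. n s $ i) differentiable (at s)" if "s \<in> I" for s i
    unfolding real_differentiable_def using vd_nth[OF n_d[OF that]] by blast
  define J where "J s = lcross (n s) (dc s)" for s
  have Jdiff: "(\<lambda>s. J s $ i) differentiable (at s)" if s: "s \<in> I" for s i
  proof -
    have "i = 1 \<or> i = 2 \<or> i = 3" by (rule exhaust_3)
    then show ?thesis
      by (elim disjE; simp add: J_def; intro differentiable_diff differentiable_mult ndiff[OF s] dcdiff[OF s])
  qed
  have J_d: "(J has_vector_derivative (\<chi> i. deriv (\<lambda>s. J s $ i) s)) (at s)" if "s \<in> I" for s
    by (rule vec3_deriv) (use Jdiff[OF that] in \<open>simp add: DERIV_deriv_iff_real_differentiable\<close>)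
  have contJ: "continuous_on I J"
    using J_d has_vector_derivative_continuous continuous_at_imp_continuous_on by blast
  have contdc: "continuous_on I dc"
    using dc_d has_vector_derivative_continuous continuous_at_imp_continuous_on by blast
  obtain K where K: "\<And>x. x \<in> I \<Longrightarrow> (K has_vector_derivative J x) (at x)"
    using antideriv_interval[OF I(1) I(2) contJ t0] by blast
  define a where "a s = (1/2) *\<^sub>R (dc s + J s)" for s
  define b where "b s = (1/2) *\<^sub>R (dc s - J s)" for s
  define F where "F s = (1/2) *\<^sub>R (c s + K s)" for s
  define G where "G s = (1/2) *\<^sub>R (c s - K s)" for s
  have F_d: "(F has_vector_derivative a s) (at s)" if "s \<in> I" for s
  proof -
    have "((\<lambda>s. c s + K s) has_vector_derivative dc s + J s) (at s)"
      by (rule has_vector_derivative_add[OF c_d[OF that] K[OF that]])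
    then show ?thesis unfolding F_def[abs_def] a_def
      by (rule bounded_linear.has_vector_derivative[OF bounded_linear_scaleR_right])
  qed
  have G_d: "(G has_vector_derivative b s) (at s)" if "s \<in> I" for s
  proof -
    have "((\<lambda>s. c s - K s) has_vector_derivative dc s - J s) (at s)"
      by (rule has_vector_derivative_diff[OF c_d[OF that] K[OF that]])
    then show ?thesis unfolding G_def[abs_def] b_def
      by (rule bounded_linear.has_vector_derivative[OF bounded_linear_scaleR_right])
  qed
  have adiff: "(\<lambda>s. a s $ i) differentiable (at s)" if s: "s \<in> I" for s i
    unfolding a_def using dcdiff[OF s] Jdiff[OF s] by simp
  have bdiff: "(\<lambda>s. b s $ i) differentiable (at s)" if s: "s \<in> I" for s i
    unfolding b_def using dcdiff[OF s] Jdiff[OF s] by simp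
  have na: "lprod (a s) (a s) = 0" if "s \<in> I" for s
    unfolding a_def J_def by (rule null_plus[OF nunit[OF that] nperp[OF that]])
  have nb: "lprod (b s) (b s) = 0" if "s \<in> I" for s
    unfolding b_def J_def by (rule null_minus[OF nunit[OF that] nperp[OF that]])
  have ab0: "lprod (a t) (b t) = (1/2) * lprod (dc t) (dc t)" if "t \<in> I" for t
    unfolding a_def b_def J_def by (rule prod_ab[OF nunit[OF that] nperp[OF that]])
  have cab: "lcross (a t) (b t) = ((1/2) * lprod (dc t) (dc t)) *\<^sub>R n t" if "t \<in> I" for t
    unfolding a_def b_def J_def by (rule cross_ab[OF nperp[OF that]])
  have conta: "continuous_on I a" unfolding a_def
    by (intro continuous_intros contdc contJ)
  have contb: "continuous_on I b" unfolding b_def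
    by (intro continuous_intros contdc contJ)

  define Om where "Om = {p::real\<times>real. fst p + snd p \<in> I \<and> fst p - snd p \<in> I \<and>
      lprod (a (fst p + snd p)) (b (fst p - snd p)) \<noteq> 0}"
  define Omy where "Omy = {w::real\<times>real. fst w \<in> I \<and> snd w \<in> I \<and> lprod (a (fst w)) (b (snd w)) \<noteq> 0}"
  define Lm where "Lm p = (fst p + snd p, fst p - snd p)" for p :: "real \<times> real"
  define X where "X p = F (fst p + snd p) + G (fst p - snd p)" for p
  define N where "N p = (1 / lprod (a (fst p + snd p)) (b (fst p - snd p))) *\<^sub>R
      lcross (a (fst p + snd p)) (b (fst p - snd p))" for p

  have oOmy: "open Omy"
  proof -
    have ca: "continuous_on (I \<times> I) (\<lambda>w. a (fst w))"
      by (rule continuous_on_compose2[OF conta continuous_on_fst[OF continuous_on_id]]) auto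
    have cb: "continuous_on (I \<times> I) (\<lambda>w. b (snd w))"
      by (rule continuous_on_compose2[OF contb continuous_on_snd[OF continuous_on_id]]) auto
    have "open ((I \<times> I) \<inter> (\<lambda>w. lprod (a (fst w)) (b (snd w))) -` (-{0}))"
      by (rule continuous_open_preimage[OF continuous_on_lprod[OF ca cb]]) (auto intro: open_Times I(1))
    moreover have "Omy = (I \<times> I) \<inter> (\<lambda>w. lprod (a (fst w)) (b (snd w))) -` (-{0})"
      by (auto simp: Omy_def)
    ultimately show ?thesis by simp
  qed
  have OmL: "Om = Lm -` Omy" by (auto simp: Om_def Omy_def Lm_def)
  have contLm: "continuous_on UNIV Lm" unfolding Lm_def by (intro continuous_intros)
  have oOm: "open Om"
  proof -
    have "open (UNIV \<inter> Lm -` Omy)" by (rule continuous_open_preimage[OF contLm open_UNIV oOmy])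
    then show ?thesis by (simp add: OmL)
  qed
  have inOm: "fst p + snd p \<in> I" "fst p - snd p \<in> I"
    "lprod (a (fst p + snd p)) (b (fst p - snd p)) \<noteq> 0" if "p \<in> Om" for p
    using that by (auto simp: Om_def)
  have axis: "(\<lambda>t. (t, 0)) ` I \<subseteq> Om"
  proof
    fix x assume "x \<in> (\<lambda>t. (t, 0::real)) ` I"
    then obtain t where t: "t \<in> I" "x = (t, 0)" by blast
    have "lprod (a t) (b t) \<noteq> 0" using ab0[OF t(1)] ctype[OF t(1)] by simp
    then show "x \<in> Om" using t by (simp add: Om_def)
  qed

  have X_d: "(X has_derivative (\<lambda>h. (fst h + snd h) *\<^sub>R a (fst p + snd p) + (fst h - snd h) *\<^sub>R b (fst p - snd p))) (at p)"
    if p: "fst p + snd p \<in> I" "fst p - snd p \<in> I" for p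
  proof -
    have 1: "((\<lambda>p. fst p + snd p) has_derivative (\<lambda>h. fst h + snd h)) (at p)"
      by (auto intro!: derivative_eq_intros)
    have 2: "(F has_derivative (\<lambda>x. x *\<^sub>R a (fst p + snd p))) (at (fst p + snd p))"
      using F_d[OF p(1)] by (simp add: has_vector_derivative_def)
    have 3: "((\<lambda>p. fst p - snd p) has_derivative (\<lambda>h. fst h - snd h)) (at p)"
      by (auto intro!: derivative_eq_intros)
    have 4: "(G has_derivative (\<lambda>x. x *\<^sub>R b (fst p - snd p))) (at (fst p - snd p))"
      using G_d[OF p(2)] by (simp add: has_vector_derivative_def)
    from has_derivative_add[OF diff_chain_at[OF 1 2] diff_chain_at[OF 3 4]]
    show ?thesis by (simp add: X_def[abs_def] o_def)
  qed
  have XuXv: "X_u X p = a (fst p + snd p) + b (fst p - snd p)"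
    "X_v X p = a (fst p + snd p) - b (fst p - snd p)" if p: "p \<in> Om" for p
    using sym[OF frechet_derivative_at[OF X_d[OF inOm(1,2)[OF p]]]]
    by (simp_all add: X_u_def X_v_def)

  have reg: "regular_surface X Om"
    unfolding regular_surface_def
  proof (intro conjI ballI allI oOm)
    fix p assume p: "p \<in> Om"
    note ii = inOm[OF p]
    show "X differentiable at p" using X_d[OF ii(1,2)] differentiableI by blast
    show "X_u X p \<noteq> 0" using reg_alg(1)[OF na[OF ii(1)] nb[OF ii(2)] ii(3)] by (simp add: XuXv[OF p])
    fix k :: real
    show "X_v X p \<noteq> k *\<^sub>R X_u X p" using reg_alg(2)[OF na[OF ii(1)] nb[OF ii(2)] ii(3)] by (simp add: XuXv[OF p])
  qed

  have unf: "unit_normal_field X N Om"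
    unfolding unit_normal_field_def
  proof (intro conjI ballI)
    have cA: "continuous_on Om (\<lambda>p. a (fst p + snd p))"
      by (rule continuous_on_compose2[OF conta]) (auto intro!: continuous_intros simp: Om_def)
    have cB: "continuous_on Om (\<lambda>p. b (fst p - snd p))"
      by (rule continuous_on_compose2[OF contb]) (auto intro!: continuous_intros simp: Om_def)
    show "continuous_on Om N" unfolding N_def
      by (intro continuous_on_scaleR continuous_on_divide continuous_on_const continuous_on_lprod
          continuous_on_lcross cA cB) (auto simp: Om_def)
  next
    fix p assume p: "p \<in> Om"
    note ii = inOm[OF p]
    note nn = normal_alg[OF na[OF ii(1)] nb[OF ii(2)] ii(3)]
    show "lprod (N p) (X_u X p) = 0" using nn(1) by (simp add: XuXv[OF p] N_def)
    show "lprod (N p) (X_v X p) = 0" using nn(2) by (simp add: XuXv[OF p] N_def)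
    show "\<bar>lprod (N p) (N p)\<bar> = 1" using nn(3) by (simp add: N_def)
  qed

  have vecY: "F s + G t = vector [F s $ 1 + G t $ 1, F s $ 2 + G t $ 2, F s $ 3 + G t $ 3]" for s t
    by (simp add: vec3_eq)
  have vecY2: "F s + G t = vector [F s $ 1 + G t $ 1, F s $ 2 + G t $ 2, F s $ 3 + G t $ 3]" for s t
    by (simp add: vec3_eq)

  have XU: "X ` (Lm -` W) = (\<lambda>w. F (fst w) + G (snd w)) ` W" for W
  proof (intro equalityI subsetI)
    fix x assume "x \<in> X ` (Lm -` W)"
    then obtain q where q: "Lm q \<in> W" "x = X q" by blast
    then show "x \<in> (\<lambda>w. F (fst w) + G (snd w)) ` W"
      by (auto simp: X_def Lm_def image_iff intro!: bexI[OF _ q(1)])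
  next
    fix x assume "x \<in> (\<lambda>w. F (fst w) + G (snd w)) ` W"
    then obtain w where w: "w \<in> W" "x = F (fst w) + G (snd w)" by blast
    define q where "q = ((fst w + snd w) / 2, (fst w - snd w) / 2)"
    have "Lm q = w" by (simp add: Lm_def q_def prod_eq_iff field_simps)
    moreover have "X q = x" by (simp add: X_def q_def w(2) field_simps)
    ultimately show "x \<in> X ` (Lm -` W)" using w(1) by force
  qed

  have BIg: "BI_general_surface X Om"
    unfolding BI_general_surface_def
  proof (intro conjI ballI reg)
    fix p assume p: "p \<in> Om"
    note ii = inOm[OF p]
    define w0 where "w0 = Lm p"
    have w0: "w0 \<in> Omy" using p by (simp add: OmL w0_def)
    have fw0: "fst w0 = fst p + snd p" "snd w0 = fst p - snd p" by (simp_all add: w0_def Lm_def)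
    have OmyI: "Omy \<subseteq> I \<times> I" by (auto simp: Omy_def)
    have dF: "((\<lambda>s. F s $ i) has_real_derivative a s $ i) (at s)" if "s \<in> I" for s i
      using vd_nth[OF F_d[OF that]] .
    have dG: "((\<lambda>s. G s $ i) has_real_derivative b s $ i) (at s)" if "s \<in> I" for s i
      using vd_nth[OF G_d[OF that]] .
    have da: "((\<lambda>s. a s $ i) has_real_derivative deriv (\<lambda>s. a s $ i) s) (at s)" if "s \<in> I" for s i
      using adiff[OF that] by (simp add: DERIV_deriv_iff_real_differentiable)
    have db: "((\<lambda>s. b s $ i) has_real_derivative deriv (\<lambda>s. b s $ i) s) (at s)" if "s \<in> I" for s i
      using bdiff[OF that] by (simp add: DERIV_deriv_iff_real_differentiable)
    have na3: "(a s $ 1)^2 + (a s $ 2)^2 - (a s $ 3)^2 = 0" "(a s $ 2)^2 + (a s $ 1)^2 - (a s $ 3)^2 = 0"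
      if "s \<in> I" for s
      using na[OF that] by (simp_all add: lprod_def power2_eq_square)
    have nb3: "(b s $ 1)^2 + (b s $ 2)^2 - (b s $ 3)^2 = 0" "(b s $ 2)^2 + (b s $ 1)^2 - (b s $ 3)^2 = 0"
      if "s \<in> I" for s
      using nb[OF that] by (simp_all add: lprod_def power2_eq_square)
    have nu: "lcross (a (fst w0)) (b (snd w0)) $ 1 \<noteq> 0 \<or> lcross (a (fst w0)) (b (snd w0)) $ 2 \<noteq> 0"
      using nu12[OF na[OF ii(1)] nb[OF ii(2)] ii(3)] by (simp add: fw0)
    show "\<exists>U. open U \<and> p \<in> U \<and> U \<subseteq> Om \<and> (\<exists>\<psi> V. born_infeld_soliton \<psi> V \<and>
        (X ` U = graph_x \<psi> V \<or> X ` U = graph_y \<psi> V \<or> X ` U = graph_z \<psi> V))"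
    proof (cases "lcross (a (fst w0)) (b (snd w0)) $ 1 \<noteq> 0")
      case True
      have D0: "a (fst w0) $ 2 * b (snd w0) $ 3 - a (fst w0) $ 3 * b (snd w0) $ 2 \<noteq> 0"
        using True by simp
      obtain W V \<psi> where W: "open W" "w0 \<in> W" "W \<subseteq> Omy" "born_infeld_soliton \<psi> V"
        and img: "(\<lambda>w. (F (fst w) $ 1 + G (snd w) $ 1, F (fst w) $ 2 + G (snd w) $ 2, F (fst w) $ 3 + G (snd w) $ 3)) ` W
          = (\<lambda>q. (\<psi> q, fst q, snd q)) ` V"
        using BI_local[OF oOmy w0 OmyI dF[where i=1] dF[where i=2] dF[where i=3] da[where i=1] da[where i=2] da[where i=3] dG[where i=1] dG[where i=2] dG[where i=3] db[where i=1] db[where i=2] db[where i=3]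
          na3(1) nb3(1) D0]
        by blast
      define U where "U = Lm -` W"
      have oU: "open U"
      proof -
        have "open (UNIV \<inter> Lm -` W)" by (rule continuous_open_preimage[OF contLm open_UNIV W(1)])
        then show ?thesis by (simp add: U_def)
      qed
      have pU: "p \<in> U" using W(2) by (simp add: U_def w0_def)
      have UOm: "U \<subseteq> Om" using W(3) by (auto simp: U_def OmL)
      have "X ` U = graph_x \<psi> V"
      proof -
        have "X ` U = (\<lambda>x. vector [fst x, fst (snd x), snd (snd x)]) `
            ((\<lambda>w. (F (fst w) $ 1 + G (snd w) $ 1, F (fst w) $ 2 + G (snd w) $ 2, F (fst w) $ 3 + G (snd w) $ 3)) ` W)"
          unfolding U_def XU image_image by (simp add: vecY[symmetric])
        also have "\<dots> = (\<lambda>x. vector [fst x, fst (snd x), snd (snd x)]) ` ((\<lambda>q. (\<psi> q, fst q, snd q)) ` V)"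
          by (simp only: img)
        also have "\<dots> = graph_x \<psi> V"
          by (simp add: graph_x_img image_image)
        finally show ?thesis .
      qed
      then show ?thesis using oU pU UOm W(4) by blast
    next
      case False
      then have F2: "lcross (a (fst w0)) (b (snd w0)) $ 2 \<noteq> 0" using nu by blast
      have D0: "a (fst w0) $ 1 * b (snd w0) $ 3 - a (fst w0) $ 3 * b (snd w0) $ 1 \<noteq> 0"
        using F2 by (simp add: algebra_simps)
      obtain W V \<psi> where W: "open W" "w0 \<in> W" "W \<subseteq> Omy" "born_infeld_soliton \<psi> V"
        and img: "(\<lambda>w. (F (fst w) $ 2 + G (snd w) $ 2, F (fst w) $ 1 + G (snd w) $ 1, F (fst w) $ 3 + G (snd w) $ 3)) ` W
          = (\<lambda>q. (\<psi> q, fst q, snd q)) ` V"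
        using BI_local[OF oOmy w0 OmyI dF[where i=2] dF[where i=1] dF[where i=3] da[where i=2] da[where i=1] da[where i=3] dG[where i=2] dG[where i=1] dG[where i=3] db[where i=2] db[where i=1] db[where i=3]
          na3(2) nb3(2) D0]
        by blast
      define U where "U = Lm -` W"
      have oU: "open U"
      proof -
        have "open (UNIV \<inter> Lm -` W)" by (rule continuous_open_preimage[OF contLm open_UNIV W(1)])
        then show ?thesis by (simp add: U_def)
      qed
      have pU: "p \<in> U" using W(2) by (simp add: U_def w0_def)
      have UOm: "U \<subseteq> Om" using W(3) by (auto simp: U_def OmL)
      have "X ` U = graph_y \<psi> V"
      proof -
        have "X ` U = (\<lambda>x. vector [fst (snd x), fst x, snd (snd x)]) `
            ((\<lambda>w. (F (fst w) $ 2 + G (snd w) $ 2, F (fst w) $ 1 + G (snd w) $ 1, F (fst w) $ 3 + G (snd w) $ 3)) ` W)"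
          unfolding U_def XU image_image by (simp add: vecY[symmetric])
        also have "\<dots> = (\<lambda>x. vector [fst (snd x), fst x, snd (snd x)]) ` ((\<lambda>q. (\<psi> q, fst q, snd q)) ` V)"
          by (simp only: img)
        also have "\<dots> = graph_y \<psi> V"
          by (simp add: graph_y_img image_image)
        finally show ?thesis .
      qed
      then show ?thesis using oU pU UOm W(4) by blast
    qed
  qed

  have bd: "X (t, 0) = c t \<and> N (t, 0) = n t" if t: "t \<in> I" for t
  proof
    show "X (t, 0) = c t" by (simp add: X_def F_def G_def vec3_eq field_simps)
    have "N (t, 0) = (1 / ((1/2) * lprod (dc t) (dc t))) *\<^sub>R (((1/2) * lprod (dc t) (dc t)) *\<^sub>R n t)"
      by (simp add: N_def ab0[OF t] cab[OF t])
    also have "\<dots> = n t" using ctype[OF t] by simp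
    finally show "N (t, 0) = n t" .
  qed
  show ?thesis
    using oOm axis BIg unf bd by blast
qed

end
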